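(* Let $n,m\ge 1$. For each $i\in\{1,\dots,n\}$ let $\Gamma_i\in\mathbb{R}^{m\times m}$ be a diagonal matrix with diagonal entries in $\{0,1\}$, let $\mathcal{B}_i\in\mathbb{R}^{l_i\times m}$, $Z_i\in\mathbb{R}^{k_i\times l_i}$ and $\mu_i\ge 0$ be such that $M_i=\mathcal{B}_i\Gamma_i\Gamma_i\mathcal{B}_i^{\top}+\mu_iZ_i^{\top}Z_i$ is invertible, and set $P_i=\Gamma_i-\Gamma_i\mathcal{B}_i^{\top}M_i^{-1}\mathcal{B}_i\Gamma_i$ and $\mathcal{P}_{III}=\sum_{i=1}^nP_i$. Let $\mathbf{1}\in\mathbb{R}^m$ be the all-ones vector. Then the following statements are equivalent: (a) $\mathcal{P}_{III}\mathbf{1}=0$; (b) $P_i\mathbf{1}=0$ for every $i\in\{1,\dots,n\}$; (c) for every $i\in\{1,\dots,n\}$ there exists $x_i\in\mathbb{R}^{l_i}$ with $\Gamma_i\mathcal{B}_i^{\top}x_i=\Gamma_i\mathbf{1}$ and, if $\mu_i>0$, additionally $Z_ix_i=0$.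
   Context: In the paper, $\Gamma_i$ is the visibility matrix of the $i$-th (partial) datum shape $D_i\in\mathbb{R}^{d\times m}$ (its $j$-th diagonal entry is $1$ iff the $j$-th point is observed in $D_i$), $\mathcal{B}_i=\mathcal{B}_i(D_i)$ is the matrix of features of the points of $D_i$ under a linear basis warp, $Z_i$ its regularization matrix and $\mu_i$ its smoothing weight. *)

theory Defs
  imports "Jordan_Normal_Form.Matrix"
begin

definition mat_inv :: "real mat \<Rightarrow> real mat" where
  "mat_inv A = (SOME B. inverts_mat A B \<and> inverts_mat B A)"

definition M_mat :: "real mat \<Rightarrow> real mat \<Rightarrow> real mat \<Rightarrow> real \<Rightarrow> real mat" where
  "M_mat G B Z mu = B * G * G * transpose_mat B + mu \<cdot>\<^sub>m (transpose_mat Z * Z)"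

definition P_mat :: "real mat \<Rightarrow> real mat \<Rightarrow> real mat \<Rightarrow> real \<Rightarrow> real mat" where
  "P_mat G B Z mu = G - G * transpose_mat B * mat_inv (M_mat G B Z mu) * B * G"

definition ones_vec :: "nat \<Rightarrow> real vec" where
  "ones_vec m = vec m (\<lambda>_. 1)"

end

theory Submission
  imports Defs
begin

lemma mat_inv_props:
  assumes M: "M \<in> carrier_mat l l" and inv: "invertible_mat M"
  shows "mat_inv M \<in> carrier_mat l l" "M * mat_inv M = 1\<^sub>m l" "mat_inv M * M = 1\<^sub>m l"
proof -
  from inv obtain B where "inverts_mat M B \<and> inverts_mat B M" unfolding invertible_mat_def by blast
  hence "inverts_mat M (mat_inv M) \<and> inverts_mat (mat_inv M) M"
    unfolding mat_inv_def by (rule someI[where P = "\<lambda>B. inverts_mat M B \<and> inverts_mat B M"])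
  hence h1: "M * mat_inv M = 1\<^sub>m l" and h2: "mat_inv M * M = 1\<^sub>m (dim_row (mat_inv M))"
    using M unfolding inverts_mat_def by auto
  have "dim_col (M * mat_inv M) = l" unfolding h1 by simp
  hence c: "dim_col (mat_inv M) = l" by simp
  have r1: "dim_col (1\<^sub>m (dim_row (mat_inv M)) :: real mat) = dim_row (mat_inv M)" by (rule index_one_mat(3))
  have r2: "dim_col (mat_inv M * M) = dim_col M" by (rule index_mult_mat(3))
  have r3: "dim_col M = l" using M by auto
  have r: "dim_row (mat_inv M) = l" using r1 r2 r3 unfolding h2 by linarith
  show cQ: "mat_inv M \<in> carrier_mat l l" by (rule carrier_matI[OF r c])
  show "M * mat_inv M = 1\<^sub>m l" by fact
  have "mat_inv M * M = 1\<^sub>m (dim_row (mat_inv M))" by (rule h2)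
  then show "mat_inv M * M = 1\<^sub>m l" unfolding r .
qed


lemma smult_mat_vec_assoc:
  fixes A :: "real mat"
  assumes "A \<in> carrier_mat nr nc" "v \<in> carrier_vec nc"
  shows "(c \<cdot>\<^sub>m A) *\<^sub>v v = c \<cdot>\<^sub>v (A *\<^sub>v v)"
  using assms by (intro eq_vecI) (auto simp: scalar_prod_def sum_distrib_left ac_simps)

lemma self_scalar_nonneg:
  fixes v :: "real vec"
  shows "v \<bullet> v \<ge> 0"
  unfolding scalar_prod_def by (auto intro: sum_nonneg)

lemma self_scalar_zero:
  fixes v :: "real vec"
  assumes "v \<in> carrier_vec n" "v \<bullet> v = 0"
  shows "v = 0\<^sub>v n"
proof (rule eq_vecI)
  have "\<forall>i\<in>{0..<dim_vec v}. v $ i * v $ i = 0"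
    using assms(2) unfolding scalar_prod_def
    by (subst sum_nonneg_eq_0_iff[symmetric]) auto
  then show "\<And>i. i < dim_vec (0\<^sub>v n) \<Longrightarrow> v $ i = 0\<^sub>v n $ i" using assms(1) by auto
  show "dim_vec v = dim_vec (0\<^sub>v n)" using assms(1) by auto
qed

lemma diag01_props:
  fixes G :: "real mat"
  assumes G: "G \<in> carrier_mat m m" and d: "diagonal_mat G"
    and e: "\<And>j. j < m \<Longrightarrow> G $$ (j, j) \<in> {0, 1}"
  shows "G * G = G" "transpose_mat G = G"
proof -
  have off: "\<And>i j. i < m \<Longrightarrow> j < m \<Longrightarrow> i \<noteq> j \<Longrightarrow> G $$ (i, j) = 0"
    using d G unfolding diagonal_mat_def by auto
  show "transpose_mat G = G"
  proof (rule eq_matI)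
    fix i j assume ij: "i < dim_row G" "j < dim_col G"
    show "transpose_mat G $$ (i, j) = G $$ (i, j)"
      using G ij off[of i j] off[of j i] by (cases "i = j") auto
  qed (use G in auto)
  show "G * G = G"
  proof (rule eq_matI)
    fix i j assume ij: "i < dim_row G" "j < dim_col G"
    have "(G * G) $$ (i, j) = (\<Sum>q\<in>{0..<m}. G $$ (i, q) * G $$ (q, j))"
      using G ij by (auto simp: scalar_prod_def)
    also have "\<dots> = (\<Sum>q\<in>{i}. G $$ (i, q) * G $$ (q, j))"
      using G ij off by (intro sum.mono_neutral_right) auto
    also have "\<dots> = G $$ (i, j)"
      using G ij off e[of i] by (cases "i = j") auto
    finally show "(G * G) $$ (i, j) = G $$ (i, j)" .
  qed (use G in auto)
qed

lemma vec_sub_eq: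
  fixes a b c :: "real vec"
  assumes "a \<in> carrier_vec n" "b \<in> carrier_vec n" "a + b = c"
  shows "c - a = b"
  using assms by (intro eq_vecI) auto

lemma real_eq_helper: "(a::real) = b - c \<Longrightarrow> b = a + c" by simp

lemma key:
  fixes G B Z :: "real mat"
  assumes G: "G \<in> carrier_mat m m" and GG: "G * G = G" and GT: "transpose_mat G = G"
    and B: "B \<in> carrier_mat l m" and Z: "Z \<in> carrier_mat k l"
    and inv: "invertible_mat (M_mat G B Z mu)" and y: "y \<in> carrier_vec m"
  defines "x \<equiv> mat_inv (M_mat G B Z mu) *\<^sub>v (B *\<^sub>v (G *\<^sub>v y))"
  defines "r \<equiv> G *\<^sub>v y - G *\<^sub>v (transpose_mat B *\<^sub>v x)"
  shows "x \<in> carrier_vec l" "P_mat G B Z mu *\<^sub>v y = r"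
    "y \<bullet> r = r \<bullet> r + mu * ((Z *\<^sub>v x) \<bullet> (Z *\<^sub>v x))"
proof -
  let ?M = "M_mat G B Z mu"
  let ?Q = "mat_inv ?M"
  have BT: "transpose_mat B \<in> carrier_mat m l" using B by auto
  have ZT: "transpose_mat Z \<in> carrier_mat l k" using Z by auto
  have M: "?M \<in> carrier_mat l l" unfolding M_mat_def using G B Z by auto
  note Q = mat_inv_props[OF M inv]
  show x: "x \<in> carrier_vec l" unfolding x_def using Q(1) B G y by auto
  show "P_mat G B Z mu *\<^sub>v y = r"
  proof -
    have c1: "G * transpose_mat B \<in> carrier_mat m l" using G BT by auto
    have c2: "G * transpose_mat B * ?Q \<in> carrier_mat m l" using c1 Q(1) by auto
    have c3: "G * transpose_mat B * ?Q * B \<in> carrier_mat m m" using c2 B by auto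
    have c4: "G * transpose_mat B * ?Q * B * G \<in> carrier_mat m m" using c3 G by auto
    have "(G * transpose_mat B * ?Q * B * G) *\<^sub>v y = G *\<^sub>v (transpose_mat B *\<^sub>v (?Q *\<^sub>v (B *\<^sub>v (G *\<^sub>v y))))"
      using assoc_mult_mat_vec[OF c3 G y] assoc_mult_mat_vec[OF c2 B, of "G *\<^sub>v y"]
        assoc_mult_mat_vec[OF c1 Q(1), of "B *\<^sub>v (G *\<^sub>v y)"]
        assoc_mult_mat_vec[OF G BT, of "?Q *\<^sub>v (B *\<^sub>v (G *\<^sub>v y))"] G B Q(1) y by auto
    then show ?thesis unfolding P_mat_def r_def x_def
      using minus_mult_distrib_mat_vec[OF G c4 y] by simp
  qed
  have Mx: "?M *\<^sub>v x = B *\<^sub>v (G *\<^sub>v y)"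
    unfolding x_def using Q(2) M Q(1) B G y
    by (simp flip: assoc_mult_mat_vec[of _ l l _ l])
  have Mx2: "?M *\<^sub>v x = B *\<^sub>v (G *\<^sub>v (G *\<^sub>v (transpose_mat B *\<^sub>v x))) + mu \<cdot>\<^sub>v (transpose_mat Z *\<^sub>v (Z *\<^sub>v x))"
  proof -
    have c1: "B * G \<in> carrier_mat l m" using B G by auto
    have c2: "B * G * G \<in> carrier_mat l m" using c1 G by auto
    have c3: "B * G * G * transpose_mat B \<in> carrier_mat l l" using c2 BT by auto
    have c4: "transpose_mat Z * Z \<in> carrier_mat l l" using ZT Z by auto
    have e1: "(B * G * G * transpose_mat B) *\<^sub>v x = B *\<^sub>v (G *\<^sub>v (G *\<^sub>v (transpose_mat B *\<^sub>v x)))"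
      using assoc_mult_mat_vec[OF c2 BT x] assoc_mult_mat_vec[OF c1 G, of "transpose_mat B *\<^sub>v x"]
        assoc_mult_mat_vec[OF B G, of "G *\<^sub>v (transpose_mat B *\<^sub>v x)"] G BT x by auto
    have e2: "(mu \<cdot>\<^sub>m (transpose_mat Z * Z)) *\<^sub>v x = mu \<cdot>\<^sub>v (transpose_mat Z *\<^sub>v (Z *\<^sub>v x))"
      using smult_mat_vec_assoc[OF c4 x] assoc_mult_mat_vec[OF ZT Z x] by simp
    show ?thesis unfolding M_mat_def
      using add_mult_distrib_mat_vec[OF c3 smult_carrier_mat[OF c4] x] e1 e2 by simp
  qed
  have GGv: "\<And>v. v \<in> carrier_vec m \<Longrightarrow> G *\<^sub>v (G *\<^sub>v v) = G *\<^sub>v v"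
    using GG G by (metis assoc_mult_mat_vec)
  have r: "r \<in> carrier_vec m" unfolding r_def using G BT x y by auto
  have Gr: "G *\<^sub>v r = r" unfolding r_def using G BT x y
    by (simp add: mult_minus_distrib_mat_vec[of _ m m] flip: assoc_mult_mat_vec[of G m m G m] add: GG)
  have "B *\<^sub>v (G *\<^sub>v r) = B *\<^sub>v (G *\<^sub>v y) - B *\<^sub>v (G *\<^sub>v (G *\<^sub>v (transpose_mat B *\<^sub>v x)))"
    unfolding r_def using G B BT x y
    by (simp add: mult_minus_distrib_mat_vec[of _ m m] mult_minus_distrib_mat_vec[of _ l m] GGv)
  also have "\<dots> = mu \<cdot>\<^sub>v (transpose_mat Z *\<^sub>v (Z *\<^sub>v x))"
  proof -
    have e: "B *\<^sub>v (G *\<^sub>v (G *\<^sub>v (transpose_mat B *\<^sub>v x))) + mu \<cdot>\<^sub>v (transpose_mat Z *\<^sub>v (Z *\<^sub>v x)) = B *\<^sub>v (G *\<^sub>v y)"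
      using Mx Mx2 by simp
    show ?thesis
      by (rule vec_sub_eq[OF _ _ e, of l]) (use G B BT Z ZT x in auto)
  qed
  finally have BGr: "B *\<^sub>v (G *\<^sub>v r) = mu \<cdot>\<^sub>v (transpose_mat Z *\<^sub>v (Z *\<^sub>v x))" .
  have Gy: "G *\<^sub>v y \<in> carrier_vec m" using G y by auto
  have Gb: "G *\<^sub>v (transpose_mat B *\<^sub>v x) \<in> carrier_vec m" using G BT x by auto
  have rr: "r \<bullet> r = r \<bullet> (G *\<^sub>v y) - r \<bullet> (G *\<^sub>v (transpose_mat B *\<^sub>v x))"
    unfolding r_def by (rule scalar_prod_minus_distrib[OF _ Gy Gb]) (use Gy Gb in auto)
  have s1: "r \<bullet> (G *\<^sub>v y) = y \<bullet> r"
  proof -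
    have "r \<bullet> (G *\<^sub>v y) = (transpose_mat G *\<^sub>v r) \<bullet> y"
      using transpose_vec_mult_scalar[OF G y r] by simp
    also have "\<dots> = r \<bullet> y" using GT Gr by simp
    also have "\<dots> = y \<bullet> r" using comm_scalar_prod[OF r y] .
    finally show ?thesis .
  qed
  have s2: "r \<bullet> (G *\<^sub>v (transpose_mat B *\<^sub>v x)) = mu * ((Z *\<^sub>v x) \<bullet> (Z *\<^sub>v x))"
  proof -
    have BTx: "transpose_mat B *\<^sub>v x \<in> carrier_vec m" using BT x by auto
    have "r \<bullet> (G *\<^sub>v (transpose_mat B *\<^sub>v x)) = (transpose_mat G *\<^sub>v r) \<bullet> (transpose_mat B *\<^sub>v x)"
      using transpose_vec_mult_scalar[OF G BTx r] by simp
    also have "\<dots> = r \<bullet> (transpose_mat B *\<^sub>v x)" using GT Gr by simp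
    also have "\<dots> = (transpose_mat B *\<^sub>v x) \<bullet> r" using comm_scalar_prod[OF r BTx] .
    also have "\<dots> = x \<bullet> (B *\<^sub>v r)" using transpose_vec_mult_scalar[OF B r x] .
    also have "\<dots> = x \<bullet> (mu \<cdot>\<^sub>v (transpose_mat Z *\<^sub>v (Z *\<^sub>v x)))" using BGr unfolding Gr by simp
    also have "\<dots> = mu * (x \<bullet> (transpose_mat Z *\<^sub>v (Z *\<^sub>v x)))"
      using x ZT Z by (intro scalar_prod_smult_right) auto
    also have "\<dots> = mu * ((transpose_mat Z *\<^sub>v (Z *\<^sub>v x)) \<bullet> x)"
    proof -
      have "transpose_mat Z *\<^sub>v (Z *\<^sub>v x) \<in> carrier_vec l" using ZT Z x by auto
      from comm_scalar_prod[OF x this] show ?thesis by (rule arg_cong)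
    qed
    also have "\<dots> = mu * ((Z *\<^sub>v x) \<bullet> (Z *\<^sub>v x))"
      using transpose_vec_mult_scalar[OF Z x, of "Z *\<^sub>v x"] Z x by simp
    finally show ?thesis .
  qed
  show "y \<bullet> r = r \<bullet> r + mu * ((Z *\<^sub>v x) \<bullet> (Z *\<^sub>v x))"
  proof -
    have h: "r \<bullet> (G *\<^sub>v y) = r \<bullet> r + r \<bullet> (G *\<^sub>v (transpose_mat B *\<^sub>v x))"
      by (rule real_eq_helper[OF rr])
    show ?thesis using h unfolding s1 s2 .
  qed
qed

lemma M_mult:
  fixes G B Z :: "real mat"
  assumes G: "G \<in> carrier_mat m m" and B: "B \<in> carrier_mat l m" and Z: "Z \<in> carrier_mat k l"
    and x: "x \<in> carrier_vec l"
  shows "M_mat G B Z mu *\<^sub>v x = B *\<^sub>v (G *\<^sub>v (G *\<^sub>v (transpose_mat B *\<^sub>v x))) + mu \<cdot>\<^sub>v (transpose_mat Z *\<^sub>v (Z *\<^sub>v x))"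
proof -
  have BT: "transpose_mat B \<in> carrier_mat m l" using B by auto
  have ZT: "transpose_mat Z \<in> carrier_mat l k" using Z by auto
  have c1: "B * G \<in> carrier_mat l m" using B G by auto
  have c2: "B * G * G \<in> carrier_mat l m" using c1 G by auto
  have c3: "B * G * G * transpose_mat B \<in> carrier_mat l l" using c2 BT by auto
  have c4: "transpose_mat Z * Z \<in> carrier_mat l l" using ZT Z by auto
  have e1: "(B * G * G * transpose_mat B) *\<^sub>v x = B *\<^sub>v (G *\<^sub>v (G *\<^sub>v (transpose_mat B *\<^sub>v x)))"
    using assoc_mult_mat_vec[OF c2 BT x] assoc_mult_mat_vec[OF c1 G, of "transpose_mat B *\<^sub>v x"]
      assoc_mult_mat_vec[OF B G, of "G *\<^sub>v (transpose_mat B *\<^sub>v x)"] G BT x by auto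
  have e2: "(mu \<cdot>\<^sub>m (transpose_mat Z * Z)) *\<^sub>v x = mu \<cdot>\<^sub>v (transpose_mat Z *\<^sub>v (Z *\<^sub>v x))"
    using smult_mat_vec_assoc[OF c4 x] assoc_mult_mat_vec[OF ZT Z x] by simp
  show ?thesis unfolding M_mat_def
    using add_mult_distrib_mat_vec[OF c3 smult_carrier_mat[OF c4] x] e1 e2 by simp
qed

lemma conv:
  fixes G B Z :: "real mat"
  assumes G: "G \<in> carrier_mat m m" and GG: "G * G = G"
    and B: "B \<in> carrier_mat l m" and Z: "Z \<in> carrier_mat k l"
    and inv: "invertible_mat (M_mat G B Z mu)" and y: "y \<in> carrier_vec m"
    and x: "x \<in> carrier_vec l"
    and hx: "G *\<^sub>v (transpose_mat B *\<^sub>v x) = G *\<^sub>v y"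
    and hz: "mu \<cdot>\<^sub>v (transpose_mat Z *\<^sub>v (Z *\<^sub>v x)) = 0\<^sub>v l"
  shows "P_mat G B Z mu *\<^sub>v y = 0\<^sub>v m"
proof -
  let ?M = "M_mat G B Z mu"
  let ?Q = "mat_inv ?M"
  have BT: "transpose_mat B \<in> carrier_mat m l" using B by auto
  have M: "?M \<in> carrier_mat l l" unfolding M_mat_def using G B Z by auto
  note Q = mat_inv_props[OF M inv]
  have GGv: "G *\<^sub>v (G *\<^sub>v y) = G *\<^sub>v y"
    using assoc_mult_mat_vec[OF G G y] GG by simp
  have "?M *\<^sub>v x = B *\<^sub>v (G *\<^sub>v (G *\<^sub>v (transpose_mat B *\<^sub>v x))) + mu \<cdot>\<^sub>v (transpose_mat Z *\<^sub>v (Z *\<^sub>v x))"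
    by (rule M_mult[OF G B Z x])
  also have "\<dots> = B *\<^sub>v (G *\<^sub>v y) + 0\<^sub>v l" unfolding hx hz GGv ..
  also have "\<dots> = B *\<^sub>v (G *\<^sub>v y)" using B G y by auto
  finally have Mx: "?M *\<^sub>v x = B *\<^sub>v (G *\<^sub>v y)" .
  have "?Q *\<^sub>v (B *\<^sub>v (G *\<^sub>v y)) = ?Q *\<^sub>v (?M *\<^sub>v x)" unfolding Mx ..
  also have "\<dots> = (?Q * ?M) *\<^sub>v x" using assoc_mult_mat_vec[OF Q(1) M x] by simp
  also have "\<dots> = x" unfolding Q(3) using x by auto
  finally have Qx: "?Q *\<^sub>v (B *\<^sub>v (G *\<^sub>v y)) = x" .
  have c1: "G * transpose_mat B \<in> carrier_mat m l" using G BT by auto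
  have c2: "G * transpose_mat B * ?Q \<in> carrier_mat m l" using c1 Q(1) by auto
  have c3: "G * transpose_mat B * ?Q * B \<in> carrier_mat m m" using c2 B by auto
  have c4: "G * transpose_mat B * ?Q * B * G \<in> carrier_mat m m" using c3 G by auto
  have "(G * transpose_mat B * ?Q * B * G) *\<^sub>v y = G *\<^sub>v (transpose_mat B *\<^sub>v (?Q *\<^sub>v (B *\<^sub>v (G *\<^sub>v y))))"
    using assoc_mult_mat_vec[OF c3 G y] assoc_mult_mat_vec[OF c2 B, of "G *\<^sub>v y"]
      assoc_mult_mat_vec[OF c1 Q(1), of "B *\<^sub>v (G *\<^sub>v y)"]
      assoc_mult_mat_vec[OF G BT, of "?Q *\<^sub>v (B *\<^sub>v (G *\<^sub>v y))"] G B Q(1) y by auto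
  also have "\<dots> = G *\<^sub>v y" unfolding Qx hx ..
  finally have e: "(G * transpose_mat B * ?Q * B * G) *\<^sub>v y = G *\<^sub>v y" .
  have "P_mat G B Z mu *\<^sub>v y = G *\<^sub>v y - (G * transpose_mat B * ?Q * B * G) *\<^sub>v y"
    unfolding P_mat_def by (rule minus_mult_distrib_mat_vec[OF G c4 y])
  also have "\<dots> = G *\<^sub>v y - G *\<^sub>v y" unfolding e ..
  also have "\<dots> = 0\<^sub>v m" using G y by (intro eq_vecI) auto
  finally show ?thesis .
qed

lemma ones_scalar:
  fixes v :: "real vec"
  assumes "v \<in> carrier_vec m"
  shows "ones_vec m \<bullet> v = (\<Sum>j<m. v $ j)"
  using assms unfolding scalar_prod_def ones_vec_def by (auto intro: sum.cong simp: lessThan_atLeast0)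

lemma vec_eq_of_diff0:
  fixes a b :: "real vec"
  assumes "a \<in> carrier_vec n" "b \<in> carrier_vec n" "a - b = 0\<^sub>v n"
  shows "a = b"
proof (rule eq_vecI)
  fix i assume ib: "i < dim_vec b"
  have i: "i < n" using ib assms(2) by simp
  have d1: "(a - b) $ i = a $ i - b $ i" using ib by simp
  have d2: "(a - b) $ i = 0" unfolding assms(3) using i by simp
  show "a $ i = b $ i" using d1 d2 by simp
qed (use assms in auto)

theorem theorem3:
  fixes n m :: nat
    and Gam B Z :: "nat \<Rightarrow> real mat"
    and l k :: "nat \<Rightarrow> nat"
    and mu :: "nat \<Rightarrow> real"
    and P_III :: "real mat"
  assumes "n \<ge> 1" and "m \<ge> 1"
    and Gam_carrier: "\<And>i. i \<in> {1..n} \<Longrightarrow> Gam i \<in> carrier_mat m m"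
    and Gam_diag: "\<And>i. i \<in> {1..n} \<Longrightarrow> diagonal_mat (Gam i)"
    and Gam_01: "\<And>i j. i \<in> {1..n} \<Longrightarrow> j < m \<Longrightarrow> Gam i $$ (j, j) \<in> {0, 1}"
    and B_carrier: "\<And>i. i \<in> {1..n} \<Longrightarrow> B i \<in> carrier_mat (l i) m"
    and Z_carrier: "\<And>i. i \<in> {1..n} \<Longrightarrow> Z i \<in> carrier_mat (k i) (l i)"
    and mu_nonneg: "\<And>i. i \<in> {1..n} \<Longrightarrow> mu i \<ge> 0"
    and M_inv: "\<And>i. i \<in> {1..n} \<Longrightarrow> invertible_mat (M_mat (Gam i) (B i) (Z i) (mu i))"
    and P_III_def: "P_III = mat m m (\<lambda>(r, c). \<Sum>i = 1..n. P_mat (Gam i) (B i) (Z i) (mu i) $$ (r, c))"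
  shows "(P_III *\<^sub>v ones_vec m = 0\<^sub>v m
          \<longleftrightarrow> (\<forall>i \<in> {1..n}. P_mat (Gam i) (B i) (Z i) (mu i) *\<^sub>v ones_vec m = 0\<^sub>v m))
       \<and> ((\<forall>i \<in> {1..n}. P_mat (Gam i) (B i) (Z i) (mu i) *\<^sub>v ones_vec m = 0\<^sub>v m)
          \<longleftrightarrow> (\<forall>i \<in> {1..n}. \<exists>x \<in> carrier_vec (l i).
                 Gam i * transpose_mat (B i) *\<^sub>v x = Gam i *\<^sub>v ones_vec m
                 \<and> (mu i > 0 \<longrightarrow> Z i *\<^sub>v x = 0\<^sub>v (k i))))"
proof -
  define Pi where "Pi i = P_mat (Gam i) (B i) (Z i) (mu i)" for i
  define one where "one = ones_vec m"
  have one: "one \<in> carrier_vec m" unfolding one_def ones_vec_def by auto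
  define x where "x i = mat_inv (M_mat (Gam i) (B i) (Z i) (mu i)) *\<^sub>v (B i *\<^sub>v (Gam i *\<^sub>v one))" for i
  define r where "r i = Gam i *\<^sub>v one - Gam i *\<^sub>v (transpose_mat (B i) *\<^sub>v x i)" for i
  have GG: "Gam i * Gam i = Gam i" and GT: "transpose_mat (Gam i) = Gam i" if i: "i \<in> {1..n}" for i
    using diag01_props[OF Gam_carrier[OF i] Gam_diag[OF i] Gam_01[OF i]] by auto
  have K: "x i \<in> carrier_vec (l i)" "Pi i *\<^sub>v one = r i"
      "one \<bullet> r i = r i \<bullet> r i + mu i * ((Z i *\<^sub>v x i) \<bullet> (Z i *\<^sub>v x i))" if i: "i \<in> {1..n}" for i
    using key[OF Gam_carrier[OF i] GG[OF i] GT[OF i] B_carrier[OF i] Z_carrier[OF i] M_inv[OF i] one]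
    unfolding Pi_def x_def r_def by auto
  have r_car: "r i \<in> carrier_vec m" if i: "i \<in> {1..n}" for i
    unfolding r_def using Gam_carrier[OF i] B_carrier[OF i] K(1)[OF i] one by auto
  have Pi_car: "Pi i \<in> carrier_mat m m" if i: "i \<in> {1..n}" for i
    unfolding Pi_def P_mat_def using Gam_carrier[OF i] B_carrier[OF i] by auto
  have nonneg: "0 \<le> one \<bullet> r i" if i: "i \<in> {1..n}" for i
    using K(3)[OF i] self_scalar_nonneg[of "r i"] self_scalar_nonneg[of "Z i *\<^sub>v x i"] mu_nonneg[OF i]
    by simp
  have PIII_car: "P_III \<in> carrier_mat m m" unfolding P_III_def by auto
  have entry: "(P_III *\<^sub>v one) $ j = (\<Sum>i = 1..n. (Pi i *\<^sub>v one) $ j)" if j: "j < m" for j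
  proof -
    have "(P_III *\<^sub>v one) $ j = (\<Sum>c<m. P_III $$ (j, c))"
      using j one unfolding P_III_def one_def ones_vec_def
      by (simp add: scalar_prod_def lessThan_atLeast0)
    also have "\<dots> = (\<Sum>c<m. \<Sum>i = 1..n. Pi i $$ (j, c))"
      using j unfolding P_III_def Pi_def by (intro sum.cong) auto
    also have "\<dots> = (\<Sum>i = 1..n. \<Sum>c<m. Pi i $$ (j, c))" by (rule sum.swap)
    also have "\<dots> = (\<Sum>i = 1..n. (Pi i *\<^sub>v one) $ j)"
    proof (rule sum.cong[OF refl])
      fix i assume i: "i \<in> {1..n}"
      show "(\<Sum>c<m. Pi i $$ (j, c)) = (Pi i *\<^sub>v one) $ j"
        using j Pi_car[OF i] unfolding one_def ones_vec_def
        by (simp add: scalar_prod_def lessThan_atLeast0)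
    qed
    finally show ?thesis .
  qed
  have part1: "P_III *\<^sub>v one = 0\<^sub>v m \<longleftrightarrow> (\<forall>i \<in> {1..n}. Pi i *\<^sub>v one = 0\<^sub>v m)"
  proof
    assume h: "\<forall>i \<in> {1..n}. Pi i *\<^sub>v one = 0\<^sub>v m"
    show "P_III *\<^sub>v one = 0\<^sub>v m"
    proof (rule eq_vecI)
      fix j assume "j < dim_vec (0\<^sub>v m :: real vec)"
      then have j: "j < m" by simp
      show "(P_III *\<^sub>v one) $ j = 0\<^sub>v m $ j"
        unfolding entry[OF j] using h j by simp
    qed (use PIII_car in simp)
  next
    assume h: "P_III *\<^sub>v one = 0\<^sub>v m"
    have "(\<Sum>i = 1..n. one \<bullet> r i) = (\<Sum>i = 1..n. \<Sum>j<m. (Pi i *\<^sub>v one) $ j)"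
    proof (rule sum.cong[OF refl])
      fix i assume i: "i \<in> {1..n}"
      show "one \<bullet> r i = (\<Sum>j<m. (Pi i *\<^sub>v one) $ j)"
        unfolding K(2)[OF i, symmetric] one_def
        by (rule ones_scalar) (use Pi_car[OF i] one[unfolded one_def] in auto)
    qed
    also have "\<dots> = (\<Sum>j<m. \<Sum>i = 1..n. (Pi i *\<^sub>v one) $ j)" by (rule sum.swap)
    also have "\<dots> = (\<Sum>j<m. (P_III *\<^sub>v one) $ j)" using entry by simp
    also have "\<dots> = 0" unfolding h by simp
    finally have s0: "(\<Sum>i = 1..n. one \<bullet> r i) = 0" .
    have each0: "one \<bullet> r i = 0" if i: "i \<in> {1..n}" for i
      using s0 sum_nonneg_eq_0_iff[of "{1..n}" "\<lambda>i. one \<bullet> r i"] nonneg i by auto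
    show "\<forall>i \<in> {1..n}. Pi i *\<^sub>v one = 0\<^sub>v m"
    proof
      fix i assume i: "i \<in> {1..n}"
      have "r i \<bullet> r i = 0"
        using each0[OF i] K(3)[OF i] self_scalar_nonneg[of "r i"] self_scalar_nonneg[of "Z i *\<^sub>v x i"] mu_nonneg[OF i]
        by (smt (verit) mult_nonneg_nonneg)
      then show "Pi i *\<^sub>v one = 0\<^sub>v m" unfolding K(2)[OF i] by (rule self_scalar_zero[OF r_car[OF i]])
    qed
  qed
  have part2: "(\<forall>i \<in> {1..n}. Pi i *\<^sub>v one = 0\<^sub>v m) \<longleftrightarrow>
     (\<forall>i \<in> {1..n}. \<exists>x \<in> carrier_vec (l i).
                 Gam i * transpose_mat (B i) *\<^sub>v x = Gam i *\<^sub>v one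
                 \<and> (mu i > 0 \<longrightarrow> Z i *\<^sub>v x = 0\<^sub>v (k i)))"
  proof (intro iffI ballI)
    fix i assume h: "\<forall>i \<in> {1..n}. Pi i *\<^sub>v one = 0\<^sub>v m" and i: "i \<in> {1..n}"
    have r0: "r i = 0\<^sub>v m" using h i K(2)[OF i] by simp
    have e1: "Gam i *\<^sub>v one = Gam i *\<^sub>v (transpose_mat (B i) *\<^sub>v x i)"
      by (rule vec_eq_of_diff0[of _ m]) (use r0 Gam_carrier[OF i] B_carrier[OF i] K(1)[OF i] one in \<open>auto simp: r_def\<close>)
    have e2: "Gam i * transpose_mat (B i) *\<^sub>v x i = Gam i *\<^sub>v (transpose_mat (B i) *\<^sub>v x i)"
      using Gam_carrier[OF i] B_carrier[OF i] K(1)[OF i] by (intro assoc_mult_mat_vec) auto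
    have zz: "mu i * ((Z i *\<^sub>v x i) \<bullet> (Z i *\<^sub>v x i)) = 0"
      using K(3)[OF i] r0 scalar_prod_right_zero[OF one] by simp
    show "\<exists>x \<in> carrier_vec (l i). Gam i * transpose_mat (B i) *\<^sub>v x = Gam i *\<^sub>v one
                 \<and> (mu i > 0 \<longrightarrow> Z i *\<^sub>v x = 0\<^sub>v (k i))"
    proof (intro bexI conjI impI)
      show "Gam i * transpose_mat (B i) *\<^sub>v x i = Gam i *\<^sub>v one" using e1 e2 by simp
      assume "mu i > 0"
      then have "(Z i *\<^sub>v x i) \<bullet> (Z i *\<^sub>v x i) = 0" using zz by simp
      then show "Z i *\<^sub>v x i = 0\<^sub>v (k i)"
        by (rule self_scalar_zero[rotated]) (use Z_carrier[OF i] K(1)[OF i] in auto)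
    qed (rule K(1)[OF i])
  next
    fix i assume h: "\<forall>i \<in> {1..n}. \<exists>x \<in> carrier_vec (l i).
                 Gam i * transpose_mat (B i) *\<^sub>v x = Gam i *\<^sub>v one
                 \<and> (mu i > 0 \<longrightarrow> Z i *\<^sub>v x = 0\<^sub>v (k i))" and i: "i \<in> {1..n}"
    obtain y where y: "y \<in> carrier_vec (l i)" and hy: "Gam i * transpose_mat (B i) *\<^sub>v y = Gam i *\<^sub>v one"
      and hz: "mu i > 0 \<longrightarrow> Z i *\<^sub>v y = 0\<^sub>v (k i)" using h i by blast
    have hx: "Gam i *\<^sub>v (transpose_mat (B i) *\<^sub>v y) = Gam i *\<^sub>v one"
      using hy Gam_carrier[OF i] B_carrier[OF i] y by (subst (asm) assoc_mult_mat_vec) auto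
    have hz': "mu i \<cdot>\<^sub>v (transpose_mat (Z i) *\<^sub>v (Z i *\<^sub>v y)) = 0\<^sub>v (l i)"
    proof (cases "mu i > 0")
      case True
      then show ?thesis using hz Z_carrier[OF i] by (intro eq_vecI) auto
    next
      case False
      then have "mu i = 0" using mu_nonneg[OF i] by simp
      then show ?thesis using Z_carrier[OF i] by (intro eq_vecI) auto
    qed
    show "Pi i *\<^sub>v one = 0\<^sub>v m" unfolding Pi_def
      by (rule conv[OF Gam_carrier[OF i] GG[OF i] B_carrier[OF i] Z_carrier[OF i] M_inv[OF i] one y hx hz'])
  qed
  show ?thesis using part1 part2 unfolding Pi_def one_def by simp
qed

end
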